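(* Let $\beta>0$ and $\theta>0$, and let $\mathcal{D}=\{(u_1,u_2)\in(0,1)^2:u_1+u_2<1\}$. Define the $2\times2$ matrix $A(u)$ by the requirement that the system $$\partial_tu_1=\operatorname{div}\Big(\nabla(u_1^2)-u_1\nabla\big(u_1^2+\beta\theta u_1u_2^2+\beta u_2^2\big)\Big),\quad \partial_tu_2=\operatorname{div}\Big(\nabla(\beta\theta u_1u_2^2+\beta u_2^2)-u_2\nabla\big(u_1^2+\beta\theta u_1u_2^2+\beta u_2^2\big)\Big)$$ reads $\partial_tu=\operatorname{div}(A(u)\nabla u)$, $u=(u_1,u_2)$. Then, for $\theta>0$ sufficiently large, there exists $(u_1,u_2)\in\mathcal{D}$ with $u_1\in(0,1/3)$, $u_2\in(2/3,1)$ such that at least one eigenvalue of $A(u)$ has a negative real part.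
   Context: This is the tumor-growth model of Jackson and Byrne: the volume-filling multiphase system with $n=2$, unit drag coefficients, $r_{ij}=0$ and intraphase pressures $q_1(u)=q_{11}u_1+q_{12}u_2$, $q_2(u)=q_{21}u_1+q_{22}u_2$ with $q_{11}=1$, $q_{12}=0$, $q_{21}=\beta\theta u_2$, $q_{22}=\beta$; the system is $\partial_tu_i=\operatorname{div}(\nabla(u_iq_i(u))-u_i\sum_j\nabla(u_jq_j(u)))$. *)

theory Defs
  imports Complex_Main "Jordan_Normal_Form.Char_Poly"
begin

text \<open>With P1(u) = u1^2, P2(u) = beta theta u1 u2^2 + beta u2^2 and P = P1 + P2,
  the system reads du_i/dt = div(grad P_i - u_i grad P), i.e.
  A_ij(u) = dP_i/du_j - u_i dP/du_j.  Indices 0,1 correspond to 1,2.\<close>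

definition dP1 :: "real \<Rightarrow> real \<Rightarrow> real \<Rightarrow> real \<Rightarrow> nat \<Rightarrow> real" where
  "dP1 \<beta> \<theta> u1 u2 j = (if j = 0 then 2 * u1 else 0)"

definition dP2 :: "real \<Rightarrow> real \<Rightarrow> real \<Rightarrow> real \<Rightarrow> nat \<Rightarrow> real" where
  "dP2 \<beta> \<theta> u1 u2 j =
     (if j = 0 then \<beta> * \<theta> * u2^2 else 2 * \<beta> * \<theta> * u1 * u2 + 2 * \<beta> * u2)"

definition JB_matrix :: "real \<Rightarrow> real \<Rightarrow> real \<Rightarrow> real \<Rightarrow> real mat" where
  "JB_matrix \<beta> \<theta> u1 u2 = mat 2 2 (\<lambda>(i, j).
     (if i = 0 then dP1 \<beta> \<theta> u1 u2 j else dP2 \<beta> \<theta> u1 u2 j)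
     - (if i = 0 then u1 else u2) * (dP1 \<beta> \<theta> u1 u2 j + dP2 \<beta> \<theta> u1 u2 j))"

end

theory Submission imports Defs begin
lemma ev2:
  fixes M :: "complex mat" and e :: complex
  assumes M: "M \<in> carrier_mat 2 2" and b: "M $$ (0,1) \<noteq> 0"
    and q: "e^2 - (M $$ (0,0) + M $$ (1,1)) * e + (M $$ (0,0) * M $$ (1,1) - M $$ (0,1) * M $$ (1,0)) = 0"
  shows "eigenvalue M e"
proof -
  define a where "a = M $$ (0,0)"
  define bb where "bb = M $$ (0,1)"
  define c where "c = M $$ (1,0)"
  define d where "d = M $$ (1,1)"
  define v where "v = vec 2 (\<lambda>i. if i = 0 then bb else e - a)"
  have v0: "v $ 0 = bb" and v1: "v $ 1 = e - a" and v1s: "v $ Suc 0 = e - a" and dv: "dim_vec v = 2" unfolding v_def by auto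
  have s: "\<And>f::nat\<Rightarrow>complex. sum f {0..<2} = f 0 + f 1" by (simp add: numeral_2_eq_2)
  have r0: "(M *\<^sub>v v) $ 0 = a * bb + bb * (e - a)"
    using M by (simp add: scalar_prod_def dv s v0 v1 v1s a_def bb_def)
  have r1: "(M *\<^sub>v v) $ 1 = c * bb + d * (e - a)"
    using M by (simp add: scalar_prod_def dv s v0 v1 v1s c_def d_def)
  have q': "e^2 - (a + d) * e + (a * d - bb * c) = 0" using q unfolding a_def bb_def c_def d_def .
  have i0: "a * bb + bb * (e - a) = e * bb" by (simp add: algebra_simps)
  have "c * bb + d * (e - a) - e * (e - a) = - (e^2 - (a + d) * e + (a * d - bb * c))"
    by (simp add: algebra_simps power2_eq_square)
  hence i1: "c * bb + d * (e - a) = e * (e - a)" using q' by simp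
  have "eigenvector M v e"
    unfolding eigenvector_def
  proof (intro conjI)
    show "v \<in> carrier_vec (dim_row M)" using M dv by (intro carrier_vecI) simp
    show "v \<noteq> 0\<^sub>v (dim_row M)"
    proof
      assume "v = 0\<^sub>v (dim_row M)"
      hence "v $ 0 = 0" using M by simp
      thus False using b v0 unfolding bb_def by simp
    qed
    show "M *\<^sub>v v = e \<cdot>\<^sub>v v"
    proof (rule eq_vecI)
      fix i assume "i < dim_vec (e \<cdot>\<^sub>v v)"
      hence i: "i = 0 \<or> i = 1" using dv by auto
      then show "(M *\<^sub>v v) $ i = (e \<cdot>\<^sub>v v) $ i"
      proof
        assume "i = 0" thus ?thesis using r0 i0 v0 dv by simp
      next
        assume "i = 1" thus ?thesis using r1 i1 v1 dv by simp
      qed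
    next
      show "dim_vec (M *\<^sub>v v) = dim_vec (e \<cdot>\<^sub>v v)" using M dv by simp
    qed
  qed
  thus ?thesis unfolding eigenvalue_def by blast
qed

lemma JB_entries:
  "JB_matrix \<beta> \<theta> u1 u2 $$ (0,0) = 2*u1 - u1*(2*u1 + \<beta>*\<theta>*u2^2)"
  "JB_matrix \<beta> \<theta> u1 u2 $$ (0,1) = - u1*(2*\<beta>*\<theta>*u1*u2 + 2*\<beta>*u2)"
  "JB_matrix \<beta> \<theta> u1 u2 $$ (1,0) = \<beta>*\<theta>*u2^2 - u2*(2*u1 + \<beta>*\<theta>*u2^2)"
  "JB_matrix \<beta> \<theta> u1 u2 $$ (1,1) = (2*\<beta>*\<theta>*u1*u2 + 2*\<beta>*u2) - u2*(2*\<beta>*\<theta>*u1*u2 + 2*\<beta>*u2)"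
  "JB_matrix \<beta> \<theta> u1 u2 \<in> carrier_mat 2 2"
  by (simp_all add: JB_matrix_def dP1_def dP2_def)

theorem lemma10:
  fixes \<beta> :: real
  assumes "\<beta> > 0"
  shows "\<exists>\<theta>0 > 0. \<forall>\<theta> > \<theta>0. \<exists>u1 u2.
           0 < u1 \<and> u1 < 1/3 \<and> 2/3 < u2 \<and> u2 < 1 \<and> u1 + u2 < 1 \<and>
           (\<exists>\<mu>. eigenvalue (map_mat complex_of_real (JB_matrix \<beta> \<theta> u1 u2)) \<mu> \<and> Re \<mu> < 0)"
proof (rule exI[of _ "(80/9 + 12*\<beta>)/\<beta>"], rule conjI)
  show "0 < (80/9 + 12*\<beta>)/\<beta>" using assms by simp
  show "\<forall>\<theta> > (80/9 + 12*\<beta>)/\<beta>. \<exists>u1 u2.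
           0 < u1 \<and> u1 < 1/3 \<and> 2/3 < u2 \<and> u2 < 1 \<and> u1 + u2 < 1 \<and>
           (\<exists>\<mu>. eigenvalue (map_mat complex_of_real (JB_matrix \<beta> \<theta> u1 u2)) \<mu> \<and> Re \<mu> < 0)"
  proof (intro allI impI)
  fix \<theta> :: real assume th: "(80/9 + 12*\<beta>)/\<beta> < \<theta>"
  have th2: "80/9 + 12*\<beta> < \<theta> * \<beta>" using th assms by (simp add: field_simps)
  have tneg: "5/18 + 3*\<beta>/8 - \<beta>*\<theta>/32 < 0" using th2 by (simp add: mult.commute)
  have tb: "\<theta> * \<beta> > 0" using th2 assms by linarith
  have thpos: "\<theta> > 0" using tb assms by (simp add: zero_less_mult_iff)
  define J where "J = JB_matrix \<beta> \<theta> (1/6) (3/4)"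
  let ?M = "map_mat complex_of_real J"
  define a where "a = J $$ (0,0)"
  define b where "b = J $$ (0,1)"
  define c where "c = J $$ (1,0)"
  define d where "d = J $$ (1,1)"
  have J: "J \<in> carrier_mat 2 2" unfolding J_def by (rule JB_entries)
  have M: "?M \<in> carrier_mat 2 2" using J by simp
  have m00: "?M $$ (0,0) = of_real a" and m01: "?M $$ (0,1) = of_real b"
   and m10: "?M $$ (1,0) = of_real c" and m11: "?M $$ (1,1) = of_real d"
    using J unfolding a_def b_def c_def d_def by auto
  have bval: "b = - (1/6)*(2*\<beta>*\<theta>*(1/6)*(3/4) + 2*\<beta>*(3/4))"
    unfolding b_def J_def by (rule JB_entries)
  have bpos: "2*\<beta>*\<theta>*(1/6)*(3/4) + 2*\<beta>*(3/4) > 0" using assms thpos by (simp add: add_pos_pos)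
  have bne: "b \<noteq> 0" unfolding bval using bpos by simp
  have aval: "a = 2*(1/6) - (1/6)*(2*(1/6) + \<beta>*\<theta>*(3/4)^2)"
    unfolding a_def J_def by (rule JB_entries)
  have dval: "d = (2*\<beta>*\<theta>*(1/6)*(3/4) + 2*\<beta>*(3/4)) - (3/4)*(2*\<beta>*\<theta>*(1/6)*(3/4) + 2*\<beta>*(3/4))"
    unfolding d_def J_def by (rule JB_entries)
  have tr: "a + d = 5/18 + 3*\<beta>/8 - \<beta>*\<theta>/32" unfolding aval dval
    by (simp add: algebra_simps power2_eq_square)
  define t where "t = complex_of_real (a + d)"
  define D where "D = complex_of_real (a*d - b*c)"
  define e where "e = (t - csqrt (t^2 - 4*D)) / 2"
  have q: "e^2 - t * e + D = 0"
  proof -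
    have "e^2 - t*e + D = ((csqrt (t^2 - 4*D))^2 - t^2)/4 + D"
      unfolding e_def by (simp add: field_simps power2_eq_square)
    also have "\<dots> = 0" by simp
    finally show ?thesis .
  qed
  have "eigenvalue ?M e"
  proof (rule ev2[OF M])
    show "?M $$ (0,1) \<noteq> 0" unfolding m01 using bne by simp
    show "e^2 - (?M $$ (0,0) + ?M $$ (1,1)) * e + (?M $$ (0,0) * ?M $$ (1,1) - ?M $$ (0,1) * ?M $$ (1,0)) = 0"
      unfolding m00 m01 m10 m11 using q unfolding t_def D_def by simp
  qed
  moreover have "Re e < 0"
  proof -
    obtain s where s: "s = csqrt (t^2 - 4*D)" by blast
    have "Re s \<ge> 0" using csqrt_principal[of "t^2 - 4*D"] unfolding s[symmetric] by linarith
    moreover have "Re t < 0" unfolding t_def using tr tneg by simp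
    ultimately have "Re t - Re s < 0" by linarith
    moreover have ree: "Re e = (Re t - Re s) / 2" unfolding e_def s[symmetric] by simp
    ultimately show ?thesis by simp
  qed
  ultimately show "\<exists>u1 u2.
           0 < u1 \<and> u1 < 1/3 \<and> 2/3 < u2 \<and> u2 < 1 \<and> u1 + u2 < 1 \<and>
           (\<exists>\<mu>. eigenvalue (map_mat complex_of_real (JB_matrix \<beta> \<theta> u1 u2)) \<mu> \<and> Re \<mu> < 0)"
    unfolding J_def by (intro exI[of _ "1/6"] exI[of _ "3/4"]) auto
  qed
qed

end
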